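(* Let $w,v\in\Sigma^*$ and $k\in\mathbb{N}$ with $w\equiv_k v$. Consider a play of the $k$-round Ehrenfeucht–Fraïssé game on $\mathfrak{A}_w$ and $\mathfrak{A}_v$ in which Duplicator follows a winning strategy, and let $a_r$ and $b_r$ be the elements of $\mathfrak{A}_w$ and $\mathfrak{A}_v$, respectively, chosen in round $r$. If for some $r\in\{1,\dots,k\}$ either $a_r\in\mathsf{Facs}(w)$ and $r+|a_r|-1<k$, or $b_r\in\mathsf{Facs}(v)$ and $r+|b_r|-1<k$, then $a_r=b_r$.
   Context: $\Sigma$ is a fixed finite alphabet. For $w \in \Sigma^*$, $\mathsf{Facs}(w)$ is the set of all factors (contiguous subwords, including $\varepsilon$ and $w$) of $w$; $|u|$ is the length of $u$. The structure $\mathfrak{A}_w$ representing $w$ has universe $\mathsf{Facs}(w)\cup\{\perp\}$, a ternary relation $R_\circ=\{(x,y,z)\in\mathsf{Facs}(w)^3 : x=y\cdot z\}$, for each letter $\mathtt{a}\in\Sigma$ a constant interpreted as $\mathtt{a}$ if $\mathtt{a}$ occurs in $w$ and as $\perp$ otherwise, and a constant $\varepsilon$ interpreted as the empty word. The $k$-round Ehrenfeucht–Fraïssé game on $\mathfrak{A}_w,\mathfrak{A}_v$: in each round $i$, Spoiler picks one of the two structures and an element of its universe, Duplicator answers with an element of the other structure's universe; let $a_i$ (in $\mathfrak{A}_w$) and $b_i$ (in $\mathfrak{A}_v$) be the chosen elements. Duplicator wins if the tuples $(a_1,\dots,a_k,\vec c^{\,\mathfrak{A}_w})$ and $(b_1,\dots,b_k,\vec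 c^{\,\mathfrak{A}_v})$, where $\vec c$ lists the interpretations of all constants, form a partial isomorphism: for all indices $i,j,l$, $a_i$ equals the interpretation of a constant $c$ iff $b_i$ equals the interpretation of $c$; $a_i=a_j$ iff $b_i=b_j$; and $a_i=a_j\cdot a_l$ iff $b_i=b_j\cdot b_l$. We write $w\equiv_k v$ if Duplicator has a winning strategy in the $k$-round game, i.e. a strategy guaranteeing a win against every play of Spoiler. *)

theory Defs
  imports Main "HOL-Library.Sublist"
begin

text \<open>Words over the alphabet 'a are lists. Elements of the structure A_w are
  of type 'a list option: Some u stands for the factor u, None for bottom.\<close>

definition Facs :: "'a list \<Rightarrow> 'a list set" where
  "Facs w = {u. sublist u w}"

definition univ :: "'a list \<Rightarrow> 'a list option set" where
  "univ w = Some ` Facs w \<union> {None}"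

text \<open>Constant symbols: Some c is the letter constant c, None is the constant epsilon.\<close>

definition const_interp :: "'a list \<Rightarrow> 'a option \<Rightarrow> 'a list option" where
  "const_interp w c = (case c of
      None \<Rightarrow> Some []
    | Some x \<Rightarrow> (if x \<in> set w then Some [x] else None))"

definition Rcat :: "'a list \<Rightarrow> 'a list option \<Rightarrow> 'a list option \<Rightarrow> 'a list option \<Rightarrow> bool" where
  "Rcat w x y z = (\<exists>x' y' z'. x = Some x' \<and> y = Some y' \<and> z = Some z'
       \<and> x' \<in> Facs w \<and> y' \<in> Facs w \<and> z' \<in> Facs w \<and> x' = y' @ z')"

definition ext_tuple :: "'a list \<Rightarrow> 'a list option list \<Rightarrow> nat + 'a option \<Rightarrow> 'a list option" where
  "ext_tuple w as x = (case x of Inl i \<Rightarrow> as ! i | Inr c \<Rightarrow> const_interp w c)"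

definition idx :: "nat \<Rightarrow> (nat + 'a option) set" where
  "idx n = Inl ` {..<n} \<union> range Inr"

definition partial_iso ::
  "'a list \<Rightarrow> 'a list \<Rightarrow> 'a list option list \<Rightarrow> 'a list option list \<Rightarrow> bool" where
  "partial_iso w v as bs =
     (length as = length bs \<and>
      (\<forall>x\<in>idx (length as). \<forall>c. ext_tuple w as x = const_interp w c
                                    \<longleftrightarrow> ext_tuple v bs x = const_interp v c) \<and>
      (\<forall>x\<in>idx (length as). \<forall>y\<in>idx (length as).
          ext_tuple w as x = ext_tuple w as y \<longleftrightarrow> ext_tuple v bs x = ext_tuple v bs y) \<and>
      (\<forall>x\<in>idx (length as). \<forall>y\<in>idx (length as). \<forall>z\<in>idx (length as).
          Rcat w (ext_tuple w as x) (ext_tuple w as y) (ext_tuple w as z)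
          \<longleftrightarrow> Rcat v (ext_tuple v bs x) (ext_tuple v bs y) (ext_tuple v bs z)))"

text \<open>A Spoiler move is a pair (side, element): side = True means Spoiler picks in A_w,
  side = False means Spoiler picks in A_v. A Duplicator strategy maps the sequence of
  Spoiler moves so far (including the current one) to Duplicator's answer.\<close>

type_synonym 'a move = "bool \<times> 'a list option"
type_synonym 'a strategy = "'a move list \<Rightarrow> 'a list option"

definition valid_moves :: "'a list \<Rightarrow> 'a list \<Rightarrow> 'a move list \<Rightarrow> bool" where
  "valid_moves w v ms = (\<forall>m\<in>set ms. snd m \<in> (if fst m then univ w else univ v))"

text \<open>Elements chosen in round i+1 (0-based index i).\<close>

definition play_a :: "'a strategy \<Rightarrow> 'a move list \<Rightarrow> nat \<Rightarrow> 'a list option" where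
  "play_a \<sigma> ms i = (if fst (ms ! i) then snd (ms ! i) else \<sigma> (take (Suc i) ms))"

definition play_b :: "'a strategy \<Rightarrow> 'a move list \<Rightarrow> nat \<Rightarrow> 'a list option" where
  "play_b \<sigma> ms i = (if fst (ms ! i) then \<sigma> (take (Suc i) ms) else snd (ms ! i))"

definition winning_strategy :: "'a list \<Rightarrow> 'a list \<Rightarrow> nat \<Rightarrow> 'a strategy \<Rightarrow> bool" where
  "winning_strategy w v k \<sigma> =
     (\<forall>ms. length ms = k \<and> valid_moves w v ms \<longrightarrow>
        (\<forall>i<k. play_a \<sigma> ms i \<in> univ w \<and> play_b \<sigma> ms i \<in> univ v) \<and>
        partial_iso w v (map (play_a \<sigma> ms) [0..<k]) (map (play_b \<sigma> ms) [0..<k]))"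

definition ef_equiv :: "'a list \<Rightarrow> nat \<Rightarrow> 'a list \<Rightarrow> bool" where
  "ef_equiv w k v = (\<exists>\<sigma>. winning_strategy w v k \<sigma>)"

end

theory Submission
  imports Defs
begin

lemma piso_const:
  assumes "partial_iso w v As Bs" "i < length As" "As ! i = const_interp w c"
  shows "Bs ! i = const_interp v c"
proof -
  have "Inl i \<in> idx (length As)" using assms(2) by (simp add: idx_def)
  then have "(ext_tuple w As (Inl i) = const_interp w c) = (ext_tuple v Bs (Inl i) = const_interp v c)"
    using assms(1) unfolding partial_iso_def by blast
  thus ?thesis using assms by (simp add: ext_tuple_def)
qed

lemma piso_rcat:
  assumes "partial_iso w v As Bs" "i < length As" "j < length As"
    "Rcat w (As ! i) (As ! j) (const_interp w c)"
  shows "Rcat v (Bs ! i) (Bs ! j) (const_interp v c)"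
proof -
  have "Inl i \<in> idx (length As)" "Inl j \<in> idx (length As)" "Inr c \<in> idx (length As)"
    using assms(2,3) by (auto simp: idx_def)
  then have "Rcat w (ext_tuple w As (Inl i)) (ext_tuple w As (Inl j)) (ext_tuple w As (Inr c))
     = Rcat v (ext_tuple v Bs (Inl i)) (ext_tuple v Bs (Inl j)) (ext_tuple v Bs (Inr c))"
    using assms(1) unfolding partial_iso_def by blast
  thus ?thesis using assms(4) by (simp add: ext_tuple_def)
qed

lemma piso_rcat2:
  assumes "partial_iso w v As Bs" "i < length As" "j < length As"
    "Rcat v (Bs ! i) (Bs ! j) (const_interp v c)"
  shows "Rcat w (As ! i) (As ! j) (const_interp w c)"
proof -
  have "Inl i \<in> idx (length As)" "Inl j \<in> idx (length As)" "Inr c \<in> idx (length As)"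
    using assms(2,3) by (auto simp: idx_def)
  then have "Rcat w (ext_tuple w As (Inl i)) (ext_tuple w As (Inl j)) (ext_tuple w As (Inr c))
     = Rcat v (ext_tuple v Bs (Inl i)) (ext_tuple v Bs (Inl j)) (ext_tuple v Bs (Inr c))"
    using assms(1) unfolding partial_iso_def by blast
  thus ?thesis using assms(4) by (simp add: ext_tuple_def)
qed

lemma piso_const2:
  assumes "partial_iso w v As Bs" "i < length As" "Bs ! i = const_interp v c"
  shows "As ! i = const_interp w c"
proof -
  have "Inl i \<in> idx (length As)" using assms(2) by (simp add: idx_def)
  then have "(ext_tuple w As (Inl i) = const_interp w c) = (ext_tuple v Bs (Inl i) = const_interp v c)"
    using assms(1) unfolding partial_iso_def by blast
  thus ?thesis using assms by (simp add: ext_tuple_def)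
qed

lemma take_upd: "take (Suc i) (ms[Suc i := m]) = take (Suc i) ms"
  by simp

lemma play_upd:
  "play_a \<sigma> (ms[Suc i := m]) i = play_a \<sigma> ms i"
  "play_b \<sigma> (ms[Suc i := m]) i = play_b \<sigma> ms i"
  by (simp_all add: play_a_def play_b_def)

lemma valid_upd:
  assumes "valid_moves w v ms" "snd m \<in> (if fst m then univ w else univ v)"
  shows "valid_moves w v (ms[j := m])"
  using assms set_update_subset_insert unfolding valid_moves_def by fastforce

lemma snoc_facts:
  assumes "y @ [x] \<in> Facs w"
  shows "y \<in> Facs w" "x \<in> set w"
  using assms unfolding Facs_def
  by (auto intro: sublist_order.order.trans[of y "y@[x]"] dest: set_mono_sublist)

lemma rcat_const:
  assumes "Rcat w a (Some y) (const_interp w (Some x))"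
  shows "a = Some (y @ [x])"
proof -
  obtain z where z: "const_interp w (Some x) = Some z" using assms unfolding Rcat_def by blast
  then have "z = [x]" by (simp add: const_interp_def split: if_splits)
  then show ?thesis using assms z unfolding Rcat_def by auto
qed

lemma main_a:
  assumes ws: "winning_strategy w v k \<sigma>"
  shows "length u = n \<Longrightarrow> length ms = k \<Longrightarrow> valid_moves w v ms \<Longrightarrow>
     play_a \<sigma> ms i = Some u \<Longrightarrow> u \<in> Facs w \<Longrightarrow> i + length u < k \<Longrightarrow>
     play_b \<sigma> ms i = Some u"
proof (induction n arbitrary: u ms i)
  case 0
  let ?As = "map (play_a \<sigma> ms) [0..<k]" and ?Bs = "map (play_b \<sigma> ms) [0..<k]"
  have pi: "partial_iso w v ?As ?Bs" using ws 0 unfolding winning_strategy_def by blast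
  have "?Bs ! i = const_interp v None"
    by (rule piso_const[OF pi, where c=None]) (use 0 in \<open>auto simp: const_interp_def\<close>)
  thus ?case using 0 by (simp add: const_interp_def)
next
  case (Suc n)
  obtain y x where u: "u = y @ [x]" using Suc.prems(1)
    by (metis length_Suc_conv_rev)
  have yF: "y \<in> Facs w" and xw: "x \<in> set w" using snoc_facts Suc.prems(5) u by auto
  define ms' where "ms' = ms[Suc i := (True, Some y)]"
  have len': "length ms' = k" using Suc.prems ms'_def by simp
  have si: "Suc i < k" using Suc.prems u by simp
  have val': "valid_moves w v ms'" unfolding ms'_def
    by (rule valid_upd[OF Suc.prems(3)]) (use yF in \<open>simp add: univ_def\<close>)
  have pa': "play_a \<sigma> ms' (Suc i) = Some y"
    using si Suc.prems(2) by (simp add: ms'_def play_a_def)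
  have ih: "play_b \<sigma> ms' (Suc i) = Some y"
    using Suc.IH[of y ms' "Suc i"] Suc.prems u len' val' pa' yF by simp
  let ?As = "map (play_a \<sigma> ms') [0..<k]" and ?Bs = "map (play_b \<sigma> ms') [0..<k]"
  have pi: "partial_iso w v ?As ?Bs" using ws len' val' unfolding winning_strategy_def by blast
  have ik: "i < k" using si by simp
  have "Rcat w (?As ! i) (?As ! Suc i) (const_interp w (Some x))"
  proof -
    have "?As ! i = Some u" using ik Suc.prems(4) by (simp add: ms'_def play_upd)
    moreover have "?As ! Suc i = Some y" using si pa' by simp
    moreover have "const_interp w (Some x) = Some [x]" using xw by (simp add: const_interp_def)
    moreover have "[x] \<in> Facs w" using xw unfolding Facs_def
      by (metis mem_Collect_eq split_list sublist_appendI append_Cons append_Nil)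
    ultimately show ?thesis using Suc.prems(5) yF u by (simp add: Rcat_def)
  qed
  then have "Rcat v (?Bs ! i) (?Bs ! Suc i) (const_interp v (Some x))"
    using piso_rcat[OF pi] ik si by simp
  then have "Rcat v (play_b \<sigma> ms i) (Some y) (const_interp v (Some x))"
    using ik si ih by (simp add: ms'_def play_upd)
  then show ?case unfolding u by (rule rcat_const)
qed


lemma main_b:
  assumes ws: "winning_strategy w v k \<sigma>"
  shows "length u = n \<Longrightarrow> length ms = k \<Longrightarrow> valid_moves w v ms \<Longrightarrow>
     play_b \<sigma> ms i = Some u \<Longrightarrow> u \<in> Facs v \<Longrightarrow> i + length u < k \<Longrightarrow>
     play_a \<sigma> ms i = Some u"
proof (induction n arbitrary: u ms i)
  case 0
  let ?Bs = "map (play_b \<sigma> ms) [0..<k]" and ?As = "map (play_a \<sigma> ms) [0..<k]"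
  have pi: "partial_iso w v ?As ?Bs" using ws 0 unfolding winning_strategy_def by blast
  have "?As ! i = const_interp w None"
    by (rule piso_const2[OF pi, where c=None]) (use 0 in \<open>auto simp: const_interp_def\<close>)
  thus ?case using 0 by (simp add: const_interp_def)
next
  case (Suc n)
  obtain y x where u: "u = y @ [x]" using Suc.prems(1)
    by (metis length_Suc_conv_rev)
  have yF: "y \<in> Facs v" and xw: "x \<in> set v" using snoc_facts Suc.prems(5) u by auto
  define ms' where "ms' = ms[Suc i := (False, Some y)]"
  have len': "length ms' = k" using Suc.prems ms'_def by simp
  have si: "Suc i < k" using Suc.prems u by simp
  have val': "valid_moves w v ms'" unfolding ms'_def
    by (rule valid_upd[OF Suc.prems(3)]) (use yF in \<open>simp add: univ_def\<close>)
  have pa': "play_b \<sigma> ms' (Suc i) = Some y"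
    using si Suc.prems(2) by (simp add: ms'_def play_b_def)
  have ih: "play_a \<sigma> ms' (Suc i) = Some y"
    using Suc.IH[of y ms' "Suc i"] Suc.prems u len' val' pa' yF by simp
  let ?Bs = "map (play_b \<sigma> ms') [0..<k]" and ?As = "map (play_a \<sigma> ms') [0..<k]"
  have pi: "partial_iso w v ?As ?Bs" using ws len' val' unfolding winning_strategy_def by blast
  have ik: "i < k" using si by simp
  have "Rcat v (?Bs ! i) (?Bs ! Suc i) (const_interp v (Some x))"
  proof -
    have "?Bs ! i = Some u" using ik Suc.prems(4) by (simp add: ms'_def play_upd)
    moreover have "?Bs ! Suc i = Some y" using si pa' by simp
    moreover have "const_interp v (Some x) = Some [x]" using xw by (simp add: const_interp_def)
    moreover have "[x] \<in> Facs v" using xw unfolding Facs_def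
      by (metis mem_Collect_eq split_list sublist_appendI append_Cons append_Nil)
    ultimately show ?thesis using Suc.prems(5) yF u by (simp add: Rcat_def)
  qed
  then have "Rcat w (?As ! i) (?As ! Suc i) (const_interp w (Some x))"
    using piso_rcat2[OF pi] ik si by simp
  then have "Rcat w (play_a \<sigma> ms i) (Some y) (const_interp w (Some x))"
    using ik si ih by (simp add: ms'_def play_upd)
  then show ?case unfolding u by (rule rcat_const)
qed


theorem lemma4p2:
  fixes w v :: "'a::finite list" and k r :: nat
    and \<sigma> :: "'a strategy" and ms :: "'a move list"
  assumes "ef_equiv w k v"
    and "winning_strategy w v k \<sigma>"
    and "length ms = k" and "valid_moves w v ms"
    and "1 \<le> r" and "r \<le> k"
    and "(\<exists>u. play_a \<sigma> ms (r - 1) = Some u \<and> u \<in> Facs w \<and> r + length u - 1 < k)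
       \<or> (\<exists>u. play_b \<sigma> ms (r - 1) = Some u \<and> u \<in> Facs v \<and> r + length u - 1 < k)"
  shows "play_a \<sigma> ms (r - 1) = play_b \<sigma> ms (r - 1)"
  using assms(7)
proof (elim disjE exE conjE)
  fix u assume h1: "play_a \<sigma> ms (r - 1) = Some u" and h2: "u \<in> Facs w"
    and h3: "r + length u - 1 < k"
  have h3': "r - 1 + length u < k" using h3 assms(5) by linarith
  have "play_b \<sigma> ms (r - 1) = Some u"
    by (rule main_a[OF assms(2) refl assms(3,4) h1 h2 h3'])
  then show ?thesis using h1 by simp
next
  fix u assume h1: "play_b \<sigma> ms (r - 1) = Some u" and h2: "u \<in> Facs v"
    and h3: "r + length u - 1 < k"
  have h3': "r - 1 + length u < k" using h3 assms(5) by linarith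
  have "play_a \<sigma> ms (r - 1) = Some u"
    by (rule main_b[OF assms(2) refl assms(3,4) h1 h2 h3'])
  then show ?thesis using h1 by simp
qed

end
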